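(* Let $\mathcal{H}_1,\ldots,\mathcal{H}_n$ be complex Hilbert spaces and let $A$ be a bounded self-adjoint operator on $\mathcal{H}_1\oplus\cdots\oplus\mathcal{H}_n$ with block decomposition $A=(A_{i,j}\mid i,j=1,\ldots,n)$, $A_{i,j}:\mathcal{H}_j\to\mathcal{H}_i$. Suppose reals $a_i$ ($i=1,\ldots,n$) and $a_{i,j}=a_{j,i}$ ($i\neq j$) satisfy $m_e(A_{i,i})\geqslant a_i$ for $i=1,\ldots,n$ and $\|A_{i,j}\|_e\leqslant a_{i,j}$ for all $i\neq j$. Let $M=(m_{i,j})$ be the real symmetric $n\times n$ matrix with $m_{i,i}=a_i$ and $m_{i,j}=-a_{i,j}$ for $i\neq j$. Then $\sigma_e(A)\subset[\lambda_{\min}(M),+\infty)$, where $\lambda_{\min}(M)$ is the minimal eigenvalue of $M$.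
   Context: For a bounded self-adjoint operator $C$ on a Hilbert space, $m_e(C)$ is the supremum of all real $m$ for which there exists a compact self-adjoint operator $K$ with $C+K\geqslant mI$. For a bounded operator $T:\mathcal{X}\to\mathcal{Y}$, $\|T\|_e=\inf\{\|T+K\|\mid K:\mathcal{X}\to\mathcal{Y}\text{ compact}\}$ is the essential norm. $\sigma_e(A)$ denotes the essential spectrum of $A$. *)

theory Defs
  imports "HOL-Analysis.Analysis"
begin

text \<open>Complex Hilbert spaces (no such notion in the distribution): a Banach space
 with a complex scalar multiplication extending the real one and a complex inner
 product (antilinear in the first, linear in the second argument) inducing the norm.\<close>
class complex_hilbert = banach +
  fixes scaleC :: "complex \<Rightarrow> 'a \<Rightarrow> 'a"
    and cinner :: "'a \<Rightarrow> 'a \<Rightarrow> complex"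
  assumes scaleC_add_right: "scaleC c (x + y) = scaleC c x + scaleC c y"
    and scaleC_add_left: "scaleC (c + d) x = scaleC c x + scaleC d x"
    and scaleC_scaleC: "scaleC c (scaleC d x) = scaleC (c * d) x"
    and scaleC_one: "scaleC 1 x = x"
    and scaleC_of_real: "scaleC (complex_of_real r) x = scaleR r x"
    and cinner_conj: "cinner x y = cnj (cinner y x)"
    and cinner_add_left: "cinner (x + y) z = cinner x z + cinner y z"
    and cinner_scaleC_left: "cinner (scaleC c x) y = cnj c * cinner x y"
    and norm_cinner: "complex_of_real ((norm x)^2) = cinner x x"

definition clinear_on :: "'a::complex_hilbert set \<Rightarrow> 'a set \<Rightarrow> ('a \<Rightarrow> 'a) \<Rightarrow> bool" where
  "clinear_on V W T \<longleftrightarrow> (\<forall>x\<in>V. T x \<in> W) \<and> (\<forall>x\<in>V. \<forall>y\<in>V. T (x + y) = T x + T y)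
     \<and> (\<forall>c. \<forall>x\<in>V. T (scaleC c x) = scaleC c (T x))"

definition bounded_on :: "'a::complex_hilbert set \<Rightarrow> 'a set \<Rightarrow> ('a \<Rightarrow> 'a) \<Rightarrow> bool" where
  "bounded_on V W T \<longleftrightarrow> clinear_on V W T \<and> (\<exists>C. \<forall>x\<in>V. norm (T x) \<le> C * norm x)"

definition compact_op :: "'a::complex_hilbert set \<Rightarrow> 'a set \<Rightarrow> ('a \<Rightarrow> 'a) \<Rightarrow> bool" where
  "compact_op V W K \<longleftrightarrow> clinear_on V W K \<and> compact (closure (K ` {x\<in>V. norm x \<le> 1}))"

definition opnorm_on :: "'a::complex_hilbert set \<Rightarrow> ('a \<Rightarrow> 'a) \<Rightarrow> real" where
  "opnorm_on V T = Sup ((\<lambda>x. norm (T x)) ` {x\<in>V. norm x \<le> 1})"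

definition ess_norm :: "'a::complex_hilbert set \<Rightarrow> 'a set \<Rightarrow> ('a \<Rightarrow> 'a) \<Rightarrow> real" where
  "ess_norm V W T = Inf ((\<lambda>K. opnorm_on V (\<lambda>x. T x + K x)) ` {K. compact_op V W K})"

definition selfadj_on :: "'a::complex_hilbert set \<Rightarrow> ('a \<Rightarrow> 'a) \<Rightarrow> bool" where
  "selfadj_on V T \<longleftrightarrow> (\<forall>x\<in>V. \<forall>y\<in>V. cinner (T x) y = cinner x (T y))"

text \<open>m_e(C) for an operator C on V (as an extended real; +\<infinity> only when V = {0}).\<close>
definition ess_min :: "'a::complex_hilbert set \<Rightarrow> ('a \<Rightarrow> 'a) \<Rightarrow> ereal" where
  "ess_min V C = Sup (ereal ` {m. \<exists>K. compact_op V V K \<and> selfadj_on V K \<and>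
       (\<forall>x\<in>V. m * (norm x)^2 \<le> Re (cinner x (C x + K x)))})"

text \<open>Essential spectrum of an operator T on the whole space: z such that T - zI is
 not invertible modulo compact operators (spectrum in the Calkin algebra).\<close>
definition ess_spectrum :: "('a::complex_hilbert \<Rightarrow> 'a) \<Rightarrow> complex set" where
  "ess_spectrum T = {z. \<not> (\<exists>B K1 K2. bounded_on UNIV UNIV B \<and> compact_op UNIV UNIV K1
      \<and> compact_op UNIV UNIV K2 \<and> (\<forall>x. B (T x - scaleC z x) = x + K1 x)
      \<and> (\<forall>x. T (B x) - scaleC z (B x) = x + K2 x))}"

definition csubspace :: "'a::complex_hilbert set \<Rightarrow> bool" where
  "csubspace V \<longleftrightarrow> 0 \<in> V \<and> (\<forall>x\<in>V. \<forall>y\<in>V. x + y \<in> V) \<and> (\<forall>c. \<forall>x\<in>V. scaleC c x \<in> V)"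

definition orth_decomp :: "nat \<Rightarrow> (nat \<Rightarrow> 'a::complex_hilbert set) \<Rightarrow> bool" where
  "orth_decomp n V \<longleftrightarrow> (\<forall>i<n. closed (V i) \<and> csubspace (V i))
     \<and> (\<forall>i<n. \<forall>j<n. i \<noteq> j \<longrightarrow> (\<forall>x\<in>V i. \<forall>y\<in>V j. cinner x y = 0))
     \<and> (\<forall>x. \<exists>u. (\<forall>i<n. u i \<in> V i) \<and> x = (\<Sum>i<n. u i))"

definition proj :: "'a::complex_hilbert set \<Rightarrow> 'a \<Rightarrow> 'a" where
  "proj V x = (THE y. y \<in> V \<and> (\<forall>v\<in>V. cinner v (x - y) = 0))"

definition min_eig :: "nat \<Rightarrow> (nat \<Rightarrow> nat \<Rightarrow> real) \<Rightarrow> real" where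
  "min_eig n M = Min {\<mu>. \<exists>v::nat \<Rightarrow> real. (\<exists>i<n. v i \<noteq> 0) \<and>
      (\<forall>i<n. (\<Sum>j<n. M i j * v j) = \<mu> * v i)}"

end

theory Submission
  imports Defs "Jordan_Normal_Form.Char_Poly"
begin

lemma cinner_add_right: "cinner (x::'a::complex_hilbert) (y + z) = cinner x y + cinner x z"
  by (metis cinner_conj cinner_add_left complex_cnj_add)

lemma cinner_scaleC_right: "cinner (x::'a::complex_hilbert) (scaleC c y) = c * cinner x y"
  by (metis cinner_conj cinner_scaleC_left complex_cnj_cnj complex_cnj_mult)

lemma cinner_zero_left[simp]: "cinner (0::'a::complex_hilbert) y = 0"
  using cinner_add_left[of "0::'a" 0 y] by simp

lemma cinner_zero_right[simp]: "cinner (x::'a::complex_hilbert) 0 = 0"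
  using cinner_add_right[of x "0::'a" 0] by simp

lemma cinner_minus_left: "cinner (- x::'a::complex_hilbert) y = - cinner x y"
  using cinner_add_left[of x "-x" y] by (simp add: eq_neg_iff_add_eq_0 add.commute)

lemma cinner_minus_right: "cinner (x::'a::complex_hilbert) (- y) = - cinner x y"
  using cinner_add_right[of x y "-y"] by (simp add: eq_neg_iff_add_eq_0 add.commute)

lemma cinner_diff_left: "cinner (x - y::'a::complex_hilbert) z = cinner x z - cinner y z"
  using cinner_add_left[of x "-y" z] by (simp add: cinner_minus_left)

lemma cinner_diff_right: "cinner (x::'a::complex_hilbert) (y - z) = cinner x y - cinner x z"
  using cinner_add_right[of x y "-z"] by (simp add: cinner_minus_right)

lemma cinner_scaleR_left: "cinner (scaleR r (x::'a::complex_hilbert)) y = complex_of_real r * cinner x y"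
  using cinner_scaleC_left[of "complex_of_real r" x y] by (simp add: scaleC_of_real)

lemma cinner_scaleR_right: "cinner (x::'a::complex_hilbert) (scaleR r y) = complex_of_real r * cinner x y"
  using cinner_scaleC_right[of x "complex_of_real r" y] by (simp add: scaleC_of_real)

lemma cinner_sum_left: "cinner (sum f A::'a::complex_hilbert) y = (\<Sum>i\<in>A. cinner (f i) y)"
  by (induction A rule: infinite_finite_induct) (auto simp: cinner_add_left)

lemma cinner_sum_right: "cinner (y::'a::complex_hilbert) (sum f A) = (\<Sum>i\<in>A. cinner y (f i))"
  by (induction A rule: infinite_finite_induct) (auto simp: cinner_add_right)

lemma cinner_self_Re: "Re (cinner (x::'a::complex_hilbert) x) = (norm x)^2"
  by (metis norm_cinner Re_complex_of_real)

lemma cinner_self_Im: "Im (cinner (x::'a::complex_hilbert) x) = 0"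
  by (metis norm_cinner Im_complex_of_real)

lemma scaleC_zero_right[simp]: "scaleC c (0::'a::complex_hilbert) = 0"
  using scaleC_add_right[of c "0::'a" 0] by simp

lemma scaleC_zero_left[simp]: "scaleC 0 (x::'a::complex_hilbert) = 0"
  using scaleC_of_real[of 0 x] by simp

lemma scaleC_minus_right: "scaleC c (- x::'a::complex_hilbert) = - scaleC c x"
  using scaleC_add_right[of c x "-x"] by (simp add: eq_neg_iff_add_eq_0 add.commute)

lemma scaleC_diff_right: "scaleC c (x - y::'a::complex_hilbert) = scaleC c x - scaleC c y"
  using scaleC_add_right[of c x "-y"] by (simp add: scaleC_minus_right)

lemma norm_scaleC: "norm (scaleC c (x::'a::complex_hilbert)) = cmod c * norm x"
proof -
  have "complex_of_real ((norm (scaleC c x))^2) = cnj c * c * cinner x x"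
    by (simp only: norm_cinner cinner_scaleC_left cinner_scaleC_right) (simp add: algebra_simps)
  also have "\<dots> = complex_of_real ((cmod c)^2) * complex_of_real ((norm x)^2)"
    by (simp only: norm_cinner complex_norm_square) (simp add: mult.commute)
  also have "\<dots> = complex_of_real ((cmod c * norm x)^2)"
    by (simp add: power_mult_distrib)
  finally have "(norm (scaleC c x))^2 = (cmod c * norm x)^2" using of_real_eq_iff by blast
  then show ?thesis by (simp add: power2_eq_iff_nonneg)
qed

lemma norm_add_sq: "(norm (x + y::'a::complex_hilbert))^2 = (norm x)^2 + (norm y)^2 + 2 * Re (cinner x y)"
proof -
  have "complex_of_real ((norm (x+y))^2) = cinner x x + cinner y y + (cinner x y + cinner y x)"
    by (simp only: norm_cinner cinner_add_left cinner_add_right algebra_simps)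
  then have "(norm (x+y))^2 = Re (cinner x x) + Re (cinner y y) + Re (cinner x y + cnj (cinner x y))"
    by (metis Re_complex_of_real cinner_conj plus_complex.sel(1))
  then show ?thesis by (simp add: cinner_self_Re)
qed

lemma norm_diff_sq: "(norm (x - y::'a::complex_hilbert))^2 = (norm x)^2 + (norm y)^2 - 2 * Re (cinner x y)"
  using norm_add_sq[of x "-y"] by (simp add: cinner_minus_right)

lemma Re_cinner_le_unit: assumes "norm (x::'a::complex_hilbert) = 1" "norm y = 1" shows "Re (cinner x y) \<le> 1"
proof -
  have "(norm (x-y))^2 = 2 - 2 * Re (cinner x y)" using norm_diff_sq[of x y] assms by simp
  then show ?thesis using zero_le_power2[of "norm (x-y)"] by linarith
qed

lemma Re_cinner_le: "Re (cinner (x::'a::complex_hilbert) y) \<le> norm x * norm y"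
proof (cases "x = 0 \<or> y = 0")
  case True then show ?thesis by auto
next
  case False
  then have nx: "norm x > 0" and ny: "norm y > 0" by auto
  have "Re (cinner (scaleR (1/norm x) x) (scaleR (1/norm y) y)) \<le> 1"
    using nx ny by (intro Re_cinner_le_unit) auto
  moreover have "Re (cinner (scaleR (1/norm x) x) (scaleR (1/norm y) y)) = (1/norm x) * ((1/norm y) * Re (cinner x y))"
    by (simp add: cinner_scaleR_left cinner_scaleR_right)
  ultimately have "(1/norm x) * (1/norm y) * Re (cinner x y) \<le> 1" by (simp add: mult.assoc)
  then have "(norm x * norm y) * ((1/norm x) * (1/norm y) * Re (cinner x y)) \<le> (norm x * norm y) * 1"
    using nx ny by (intro mult_left_mono) auto
  then show ?thesis using nx ny by (simp add: field_simps)
qed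

lemma cinner_cauchy: "cmod (cinner (x::'a::complex_hilbert) y) \<le> norm x * norm y"
proof (cases "cinner x y = 0")
  case True then show ?thesis by simp
next
  case False
  define c where "c = cnj (cinner x y) / cmod (cinner x y)"
  have cm: "cmod c = 1" using False by (simp add: c_def norm_divide)
  have "c * cinner x y = (cinner x y * cnj (cinner x y)) / complex_of_real (cmod (cinner x y))"
    unfolding c_def by (simp add: field_simps)
  also have "\<dots> = complex_of_real ((cmod (cinner x y))^2 / cmod (cinner x y))"
    by (simp only: complex_norm_square[symmetric] of_real_divide)
  also have "\<dots> = complex_of_real (cmod (cinner x y))" using False by (simp add: power2_eq_square)
  finally have "c * cinner x y = complex_of_real (cmod (cinner x y))" .
  then have "cmod (cinner x y) = Re (cinner x (scaleC c y))"
    by (simp add: cinner_scaleC_right)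
  also have "\<dots> \<le> norm x * norm (scaleC c y)" by (rule Re_cinner_le)
  also have "\<dots> = norm x * norm y" by (simp add: norm_scaleC cm)
  finally show ?thesis .
qed

lemma Re_cinner_ge: "- (norm x * norm y) \<le> Re (cinner (x::'a::complex_hilbert) y)"
  using cinner_cauchy[of x y] abs_Re_le_cmod[of "cinner x y"] by linarith

definition lin :: "('a::complex_hilbert \<Rightarrow> 'a) \<Rightarrow> bool" where
  "lin T \<longleftrightarrow> (\<forall>x y. T (x+y) = T x + T y) \<and> (\<forall>c x. T (scaleC c x) = scaleC c (T x))"

lemma lin_clinear: "lin T \<longleftrightarrow> clinear_on UNIV UNIV T"
  unfolding lin_def clinear_on_def by auto

lemma lin_add: "lin T \<Longrightarrow> T (x+y) = T x + T y" unfolding lin_def by blast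
lemma lin_scaleC: "lin T \<Longrightarrow> T (scaleC c x) = scaleC c (T x)" unfolding lin_def by blast
lemma lin_scaleR: "lin T \<Longrightarrow> T (scaleR r x) = scaleR r (T x)"
  by (metis lin_scaleC scaleC_of_real)
lemma lin_zero: "lin T \<Longrightarrow> T 0 = 0"
  using lin_scaleC[of T 0 0] by simp
lemma lin_minus: "lin T \<Longrightarrow> T (- x) = - T x"
  using lin_scaleR[of T "-1" x] by simp
lemma lin_diff: "lin T \<Longrightarrow> T (x - y) = T x - T y"
  using lin_add[of T x "-y"] lin_minus[of T y] by simp
lemma lin_sum: "lin T \<Longrightarrow> T (sum f A) = (\<Sum>i\<in>A. T (f i))"
  by (induction A rule: infinite_finite_induct) (auto simp: lin_zero lin_add)

lemma lin_bounded_linear: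
  assumes "lin T" "\<And>x. norm (T x) \<le> C * norm x" shows "bounded_linear T"
  by (rule bounded_linear_intro[where K=C]) (use assms in \<open>auto simp: lin_add lin_scaleR mult.commute\<close>)

lemma lin_compose: "lin S \<Longrightarrow> lin T \<Longrightarrow> lin (\<lambda>x. S (T x))"
  unfolding lin_def by auto

lemma lin_plus: "lin S \<Longrightarrow> lin T \<Longrightarrow> lin (\<lambda>x. S x + T x)"
  unfolding lin_def by (auto simp: scaleC_add_right)

lemma lin_uminus: "lin S \<Longrightarrow> lin (\<lambda>x. - S x)"
  unfolding lin_def by (auto simp: scaleC_minus_right)

lemma lin_sumf: "(\<And>i. i \<in> A \<Longrightarrow> lin (F i)) \<Longrightarrow> lin (\<lambda>x. \<Sum>i\<in>A. F i x)"
proof (induction A rule: infinite_finite_induct)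
  case (infinite A) then show ?case by (simp add: lin_def)
next
  case empty then show ?case by (simp add: lin_def)
next
  case (insert a A)
  then have "lin (\<lambda>x. F a x + (\<Sum>i\<in>A. F i x))" by (intro lin_plus) auto
  then show ?case using insert by simp
qed

lemma lin_id: "lin (\<lambda>x. x)" unfolding lin_def by simp

lemma lin_scaleC_op: "lin S \<Longrightarrow> lin (\<lambda>x. scaleC c (S x))"
  unfolding lin_def by (auto simp: scaleC_add_right scaleC_scaleC mult.commute)

locale odec =
  fixes n :: nat and V :: "nat \<Rightarrow> 'a::complex_hilbert set"
  assumes od: "orth_decomp n V"
begin

lemma V_closed: "i < n \<Longrightarrow> closed (V i)" using od unfolding orth_decomp_def by blast
lemma V_csub: "i < n \<Longrightarrow> csubspace (V i)" using od unfolding orth_decomp_def by blast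
lemma V_zero: "i < n \<Longrightarrow> 0 \<in> V i" using V_csub unfolding csubspace_def by blast
lemma V_add: "i < n \<Longrightarrow> x \<in> V i \<Longrightarrow> y \<in> V i \<Longrightarrow> x + y \<in> V i"
  using V_csub unfolding csubspace_def by blast
lemma V_scaleC: "i < n \<Longrightarrow> x \<in> V i \<Longrightarrow> scaleC c x \<in> V i"
  using V_csub unfolding csubspace_def by blast
lemma V_scaleR: "i < n \<Longrightarrow> x \<in> V i \<Longrightarrow> scaleR r x \<in> V i"
  by (metis V_scaleC scaleC_of_real)
lemma V_minus: "i < n \<Longrightarrow> x \<in> V i \<Longrightarrow> - x \<in> V i"
  using V_scaleR[of i x "-1"] by simp
lemma V_diff: "i < n \<Longrightarrow> x \<in> V i \<Longrightarrow> y \<in> V i \<Longrightarrow> x - y \<in> V i"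
  using V_add[of i x "-y"] V_minus[of i y] by simp
lemma V_orth: "i < n \<Longrightarrow> j < n \<Longrightarrow> i \<noteq> j \<Longrightarrow> x \<in> V i \<Longrightarrow> y \<in> V j \<Longrightarrow> cinner x y = 0"
  using od unfolding orth_decomp_def by blast
lemma V_decomp: "\<exists>u. (\<forall>i<n. u i \<in> V i) \<and> x = (\<Sum>i<n. u i)"
  using od unfolding orth_decomp_def by blast

definition dec :: "'a \<Rightarrow> nat \<Rightarrow> 'a" where
  "dec x = (SOME u. (\<forall>i<n. u i \<in> V i) \<and> x = (\<Sum>i<n. u i))"

lemma dec: "(\<forall>i<n. dec x i \<in> V i) \<and> x = (\<Sum>i<n. dec x i)"
  unfolding dec_def using V_decomp[of x] by (rule someI_ex)

lemma dec_orth: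
  assumes "i < n" "v \<in> V i" shows "cinner v (x - dec x i) = 0"
proof -
  have "x = dec x i + (\<Sum>j\<in>{..<n} - {i}. dec x j)"
    using dec[of x] assms(1) by (metis finite_lessThan lessThan_iff sum.remove)
  then have "x - dec x i = (\<Sum>j\<in>{..<n} - {i}. dec x j)" by (simp add: algebra_simps)
  then have "cinner v (x - dec x i) = (\<Sum>j\<in>{..<n} - {i}. cinner v (dec x j))"
    by (simp add: cinner_sum_right)
  also have "\<dots> = 0"
  proof (rule sum.neutral, rule ballI)
    fix j assume "j \<in> {..<n} - {i}"
    then show "cinner v (dec x j) = 0" using V_orth[of i j v "dec x j"] assms dec[of x] by auto
  qed
  finally show ?thesis .
qed

abbreviation P :: "nat \<Rightarrow> 'a \<Rightarrow> 'a" where "P i \<equiv> proj (V i)"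

lemma proj_uniq:
  assumes "i < n" "y \<in> V i" "\<forall>v\<in>V i. cinner v (x - y) = 0"
      "y' \<in> V i" "\<forall>v\<in>V i. cinner v (x - y') = 0"
  shows "y = y'"
proof -
  have d: "y - y' \<in> V i" using assms V_diff by blast
  have "cinner (y - y') (y - y') = cinner (y - y') (x - y') - cinner (y - y') (x - y)"
    by (simp add: cinner_diff_right[symmetric])
  also have "\<dots> = 0" using assms d by simp
  finally have "complex_of_real ((norm (y - y'))^2) = 0" by (simp only: norm_cinner)
  then show ?thesis by simp
qed

lemma P_char:
  assumes "i < n" "y \<in> V i" "\<forall>v\<in>V i. cinner v (x - y) = 0"
  shows "P i x = y"
  unfolding proj_def
  by (rule the_equality) (use assms proj_uniq in blast)+

lemma P_dec: "i < n \<Longrightarrow> P i x = dec x i"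
  by (rule P_char) (use dec dec_orth in auto)

lemma P_in: "i < n \<Longrightarrow> P i x \<in> V i"
  using P_dec dec by simp

lemma P_sum: "x = (\<Sum>i<n. P i x)"
  using P_dec dec[of x] by simp

lemma P_orth: "i < n \<Longrightarrow> v \<in> V i \<Longrightarrow> cinner v (x - P i x) = 0"
  using P_dec dec_orth by simp

lemma P_fix: "i < n \<Longrightarrow> v \<in> V i \<Longrightarrow> P i v = v"
  by (rule P_char) auto

lemma P_kill: "i < n \<Longrightarrow> j < n \<Longrightarrow> i \<noteq> j \<Longrightarrow> v \<in> V j \<Longrightarrow> P i v = 0"
  by (rule P_char) (auto intro: V_zero V_orth)

lemma P_lin: assumes "i < n" shows "lin (P i)"
  unfolding lin_def
proof (intro conjI allI)
  fix x y
  show "P i (x + y) = P i x + P i y"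
  proof (rule P_char[OF assms])
    show "P i x + P i y \<in> V i" using assms by (intro V_add P_in)
    show "\<forall>v\<in>V i. cinner v (x + y - (P i x + P i y)) = 0"
    proof
      fix v assume v: "v \<in> V i"
      have "x + y - (P i x + P i y) = (x - P i x) + (y - P i y)" by (simp add: algebra_simps)
      then have "cinner v (x + y - (P i x + P i y)) = cinner v (x - P i x) + cinner v (y - P i y)"
        by (simp only: cinner_add_right)
      then show "cinner v (x + y - (P i x + P i y)) = 0"
        using P_orth[OF assms v, of x] P_orth[OF assms v, of y] by simp
    qed
  qed
next
  fix c x
  show "P i (scaleC c x) = scaleC c (P i x)"
  proof (rule P_char[OF assms])
    show "scaleC c (P i x) \<in> V i" using assms by (intro V_scaleC P_in)
    show "\<forall>v\<in>V i. cinner v (scaleC c x - scaleC c (P i x)) = 0"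
      using assms by (simp add: scaleC_diff_right[symmetric] cinner_scaleC_right P_orth)
  qed
qed

lemma cinner_P_eq: "i < n \<Longrightarrow> v \<in> V i \<Longrightarrow> cinner v x = cinner v (P i x)"
  using P_orth[of i v x] by (simp add: cinner_diff_right)

lemma cinner_decomp: "cinner x y = (\<Sum>i<n. cinner (P i x) (P i y))"
proof -
  have "cinner x y = cinner x (\<Sum>i<n. P i y)" by (rule arg_cong[OF P_sum])
  also have "\<dots> = (\<Sum>i<n. cinner x (P i y))" by (simp add: cinner_sum_right)
  also have "\<dots> = (\<Sum>i<n. cinner (P i x) (P i y))"
  proof (rule sum.cong[OF refl])
    fix i assume i: "i \<in> {..<n}"
    have "cinner x (P i y) = cnj (cinner (P i y) x)" by (rule cinner_conj)
    also have "\<dots> = cnj (cinner (P i y) (P i x))" using i by (simp add: cinner_P_eq[symmetric] P_in)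
    also have "\<dots> = cinner (P i x) (P i y)" by (rule cinner_conj[symmetric])
    finally show "cinner x (P i y) = cinner (P i x) (P i y)" .
  qed
  finally show ?thesis .
qed

lemma norm_sq_decomp: "(norm x)^2 = (\<Sum>i<n. (norm (P i x))^2)"
proof -
  have "(norm x)^2 = Re (cinner x x)" by (simp add: cinner_self_Re)
  also have "\<dots> = (\<Sum>i<n. Re (cinner (P i x) (P i x)))" by (simp add: cinner_decomp[of x x] Re_sum)
  also have "\<dots> = (\<Sum>i<n. (norm (P i x))^2)" by (simp add: cinner_self_Re)
  finally show ?thesis .
qed

lemma P_norm_le: assumes "i < n" shows "norm (P i x) \<le> norm x"
proof -
  have "(norm (P i x))^2 \<le> (\<Sum>j<n. (norm (P j x))^2)"
    using assms by (intro member_le_sum) auto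
  then have "(norm (P i x))^2 \<le> (norm x)^2" using norm_sq_decomp[of x] by linarith
  then show ?thesis by (simp add: power2_le_iff_abs_le)
qed

end

definition bnd :: "('a::complex_hilbert \<Rightarrow> 'a) \<Rightarrow> bool" where
  "bnd T \<longleftrightarrow> (\<exists>C. \<forall>x. norm (T x) \<le> C * norm x)"

abbreviation cpt :: "('a::complex_hilbert \<Rightarrow> 'a) \<Rightarrow> bool" where
  "cpt K \<equiv> compact_op UNIV UNIV K"

lemma cpt_def': "cpt K \<longleftrightarrow> lin K \<and> compact (closure (K ` {x. norm x \<le> 1}))"
  unfolding compact_op_def lin_clinear by simp

lemma compact_closure_subset: "S \<subseteq> (T::'a::metric_space set) \<Longrightarrow> compact T \<Longrightarrow> compact (closure S)"
proof -
  assume st: "S \<subseteq> T" and T: "compact T"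
  have "closure S \<subseteq> T" using st T by (meson closure_minimal compact_imp_closed)
  then have "T \<inter> closure S = closure S" by blast
  moreover have "compact (T \<inter> closure S)" using T by (intro compact_Int_closed) auto
  ultimately show ?thesis by simp
qed

lemma homog_bound:
  assumes V: "\<forall>x\<in>V. \<forall>r. scaleR r x \<in> V \<and> T (scaleR r x) = scaleR r (T x)"
    and b: "\<forall>x\<in>V. norm x \<le> 1 \<longrightarrow> norm (T x) \<le> B"
    and x: "x \<in> V"
  shows "norm (T x) \<le> B * norm x"
proof (cases "x = 0")
  case True
  have "T (scaleR 0 x) = scaleR 0 (T x)" using V x by blast
  then have "T x = 0" using True by simp
  then show ?thesis using True by simp
next
  case False
  define y where "y = scaleR (1 / norm x) x"
  have y: "y \<in> V" "norm y \<le> 1" using V x False by (auto simp: y_def)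
  have "x = scaleR (norm x) y" using False by (simp add: y_def)
  moreover have "T (scaleR (norm x) y) = scaleR (norm x) (T y)" using V y by blast
  ultimately have "T x = scaleR (norm x) (T y)" by simp
  then have "norm (T x) = norm x * norm (T y)" by simp
  also have "\<dots> \<le> norm x * B" using b y by (intro mult_left_mono) auto
  finally show ?thesis by (simp add: mult.commute)
qed

lemma compact_op_bound:
  assumes K: "compact_op V W K" and V: "\<forall>x\<in>V. \<forall>r. scaleR r x \<in> V"
  shows "\<exists>C. \<forall>x\<in>V. norm (K x) \<le> C * norm x"
proof -
  have "bounded (closure (K ` {x\<in>V. norm x \<le> 1}))"
    using K unfolding compact_op_def by (simp add: compact_imp_bounded)
  then have "bounded (K ` {x\<in>V. norm x \<le> 1})" by (rule bounded_subset) (rule closure_subset)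
  then obtain B where B: "\<forall>y\<in>K ` {x\<in>V. norm x \<le> 1}. norm y \<le> B" by (auto simp: bounded_iff)
  have h: "\<forall>x\<in>V. \<forall>r. scaleR r x \<in> V \<and> K (scaleR r x) = scaleR r (K x)"
  proof (intro ballI allI conjI)
    fix x r assume x: "x \<in> V"
    show "scaleR r x \<in> V" using V x by blast
    have "K (scaleC (complex_of_real r) x) = scaleC (complex_of_real r) (K x)"
      using K x unfolding compact_op_def clinear_on_def by blast
    then show "K (scaleR r x) = scaleR r (K x)" by (simp only: scaleC_of_real)
  qed
  show ?thesis using homog_bound[OF h, of B] B by auto
qed

lemma cpt_lin: "cpt K \<Longrightarrow> lin K" by (simp add: cpt_def')

lemma cpt_bnd: "cpt K \<Longrightarrow> bnd K"
  unfolding bnd_def using compact_op_bound[of UNIV UNIV K] by auto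

lemma bnd_bounded_linear: "lin T \<Longrightarrow> bnd T \<Longrightarrow> bounded_linear T"
  unfolding bnd_def using lin_bounded_linear by blast

lemma bnd_pos: "bnd T \<Longrightarrow> \<exists>C>0. \<forall>x. norm (T x) \<le> C * norm x"
  unfolding bnd_def
proof (elim exE)
  fix C assume "\<forall>x. norm (T x) \<le> C * norm x"
  then have "\<forall>x. norm (T x) \<le> (max C 1) * norm x"
    using order_trans[OF _ mult_right_mono[OF max.cobounded1[of C 1] norm_ge_zero]] by blast
  then show "\<exists>C>0. \<forall>x. norm (T x) \<le> C * norm x" by (intro exI[of _ "max C 1"]) auto
qed

lemma cpt_zero: "cpt (\<lambda>x::'a::complex_hilbert. 0)"
  unfolding cpt_def' lin_def
proof (intro conjI allI)
  have "(0::'a) \<in> (\<lambda>x::'a. 0::'a) ` {x. norm x \<le> 1}" by (rule image_eqI[where x=0]) auto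
  then have "(\<lambda>x::'a. 0::'a) ` {x. norm x \<le> 1} = {0}" by blast
  then show "compact (closure ((\<lambda>x::'a. 0::'a) ` {x. norm x \<le> 1}))" by simp
qed auto

lemma cpt_plus:
  assumes "cpt K1" "cpt K2" shows "cpt (\<lambda>x. K1 x + K2 x)"
  unfolding cpt_def'
proof
  show "lin (\<lambda>x. K1 x + K2 x)" using assms by (intro lin_plus cpt_lin)
  let ?B = "{x::'a. norm x \<le> 1}"
  have c1: "compact (closure (K1 ` ?B))" and c2: "compact (closure (K2 ` ?B))"
    using assms by (auto simp: cpt_def')
  have "(\<lambda>x. K1 x + K2 x) ` ?B \<subseteq> {a + b |a b. a \<in> closure (K1 ` ?B) \<and> b \<in> closure (K2 ` ?B)}"
  proof
    fix w assume "w \<in> (\<lambda>x. K1 x + K2 x) ` ?B"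
    then obtain x where x: "x \<in> ?B" "w = K1 x + K2 x" by blast
    have a: "K1 x \<in> closure (K1 ` ?B)" by (rule subsetD[OF closure_subset], rule imageI, rule x(1))
    have b: "K2 x \<in> closure (K2 ` ?B)" by (rule subsetD[OF closure_subset], rule imageI, rule x(1))
    show "w \<in> {a + b |a b. a \<in> closure (K1 ` ?B) \<and> b \<in> closure (K2 ` ?B)}"
      by (rule CollectI, rule exI[of _ "K1 x"], rule exI[of _ "K2 x"]) (use x(2) a b in simp)
  qed
  then show "compact (closure ((\<lambda>x. K1 x + K2 x) ` ?B))"
    using compact_sums[OF c1 c2] by (rule compact_closure_subset)
qed

lemma cpt_sum:
  assumes "\<And>i. i \<in> A \<Longrightarrow> cpt (F i)" shows "cpt (\<lambda>x. \<Sum>i\<in>A. F i x)"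
  using assms
proof (induction A rule: infinite_finite_induct)
  case (infinite A) then show ?case by (simp add: cpt_zero)
next
  case empty then show ?case by (simp add: cpt_zero)
next
  case (insert a A)
  then have "cpt (\<lambda>x. F a x + (\<Sum>i\<in>A. F i x))" by (intro cpt_plus) auto
  then show ?case using insert by simp
qed

lemma cpt_comp_left:
  assumes K: "cpt K" and B: "lin B" "bnd B" shows "cpt (\<lambda>x. B (K x))"
  unfolding cpt_def'
proof
  show "lin (\<lambda>x. B (K x))" by (rule lin_compose[OF B(1) cpt_lin[OF K]])
  let ?B = "{x::'a. norm x \<le> 1}"
  have c: "compact (closure (K ` ?B))" using K by (simp add: cpt_def')
  have "continuous_on (closure (K ` ?B)) B"
    using bnd_bounded_linear[OF B] by (rule linear_continuous_on)
  then have "compact (B ` closure (K ` ?B))"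
    using c by (rule compact_continuous_image)
  moreover have "(\<lambda>x. B (K x)) ` ?B \<subseteq> B ` closure (K ` ?B)"
  proof
    fix w assume "w \<in> (\<lambda>x. B (K x)) ` ?B"
    then obtain x where x: "x \<in> ?B" "w = B (K x)" by blast
    have a: "K x \<in> closure (K ` ?B)" by (rule subsetD[OF closure_subset], rule imageI, rule x(1))
    show "w \<in> B ` closure (K ` ?B)" unfolding x(2) by (rule imageI, rule a)
  qed
  ultimately show "compact (closure ((\<lambda>x. B (K x)) ` ?B))" by (intro compact_closure_subset)
qed

lemma cpt_comp_right:
  assumes K: "cpt K" and B: "lin B" "bnd B" shows "cpt (\<lambda>x. K (B x))"
  unfolding cpt_def'
proof
  show "lin (\<lambda>x. K (B x))" by (rule lin_compose[OF cpt_lin[OF K] B(1)])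
  let ?B = "{x::'a. norm x \<le> 1}"
  obtain R where R: "R > 0" "\<forall>x. norm (B x) \<le> R * norm x" using bnd_pos[OF B(2)] by blast
  have c: "compact (closure (K ` ?B))" using K by (simp add: cpt_def')
  have "compact ((\<lambda>v. scaleR R v) ` closure (K ` ?B))"
    using c by (intro compact_continuous_image) (auto intro!: continuous_intros)
  moreover have "(\<lambda>x. K (B x)) ` ?B \<subseteq> (\<lambda>v. scaleR R v) ` closure (K ` ?B)"
  proof
    fix w assume "w \<in> (\<lambda>x. K (B x)) ` ?B"
    then obtain x where x: "norm x \<le> 1" "w = K (B x)" by auto
    define y where "y = scaleR (1/R) (B x)"
    have "norm (B x) \<le> R * 1" using R x order_trans[OF _ mult_left_mono[of "norm x" 1 R]] by auto
    then have "norm y \<le> 1" using R by (simp add: y_def divide_le_eq)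
    moreover have "B x = scaleR R y" using R by (simp add: y_def)
    ultimately have "w = scaleR R (K y)" "K y \<in> K ` ?B"
      using x lin_scaleR[OF cpt_lin[OF K]] by auto
    moreover have "K y \<in> closure (K ` ?B)" by (rule subsetD[OF closure_subset], rule \<open>K y \<in> K ` ?B\<close>)
    ultimately show "w \<in> (\<lambda>v. scaleR R v) ` closure (K ` ?B)" by (simp only: image_eqI)
  qed
  ultimately show "compact (closure ((\<lambda>x. K (B x)) ` ?B))" by (intro compact_closure_subset)
qed

lemma lin_uminus_id: "lin (\<lambda>x::'a::complex_hilbert. - x)"
  unfolding lin_def by (auto simp: scaleC_minus_right)

lemma bnd_uminus_id: "bnd (\<lambda>x::'a::complex_hilbert. - x)"
  unfolding bnd_def by (intro exI[of _ 1]) simp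

lemma cpt_uminus: "cpt K \<Longrightarrow> cpt (\<lambda>x. - K x)"
  using cpt_comp_left[OF _ lin_uminus_id bnd_uminus_id] by blast

lemma opnorm_bound:
  assumes h: "\<forall>x\<in>V. \<forall>r. scaleR r x \<in> V \<and> T (scaleR r x) = scaleR r (T x)"
    and C: "\<forall>x\<in>V. norm (T x) \<le> C * norm x"
    and x: "x \<in> V"
  shows "norm (T x) \<le> opnorm_on V T * norm x"
proof (rule homog_bound[OF h _ x], intro ballI impI)
  fix y assume y: "y \<in> V" "norm y \<le> 1"
  have "bdd_above ((\<lambda>x. norm (T x)) ` {x\<in>V. norm x \<le> 1})"
  proof (rule bdd_aboveI2)
    fix z assume "z \<in> {x\<in>V. norm x \<le> 1}"
    then have "norm (T z) \<le> C * norm z" "norm z \<le> 1" using C by auto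
    then have "norm (T z) \<le> max C 0 * norm z"
      using order_trans[OF _ mult_right_mono[OF max.cobounded1[of C 0] norm_ge_zero]] by blast
    also have "\<dots> \<le> max C 0 * 1" using \<open>norm z \<le> 1\<close> by (intro mult_left_mono) auto
    finally show "norm (T z) \<le> max C 0" by simp
  qed
  then show "norm (T y) \<le> opnorm_on V T"
    unfolding opnorm_on_def using y by (intro cSup_upper) auto
qed

lemma coercive_inj:
  assumes F: "lin F" and d: "\<delta> > 0" and co: "\<forall>x. \<delta> * (norm x)^2 \<le> Re (cinner x (F x))"
    and eq: "F x = F x'"
  shows "x = x'"
proof -
  have "F (x - x') = 0" using eq lin_diff[OF F] by simp
  then have "\<delta> * (norm (x - x'))^2 \<le> 0" using co[rule_format, of "x - x'"] by simp
  then have "(norm (x - x'))^2 \<le> 0" using d by (simp add: mult_le_0_iff)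
  then show ?thesis by simp
qed

lemma coercive_surj:
  assumes F: "lin F" "bnd F" and d: "\<delta> > 0" and co: "\<forall>x. \<delta> * (norm x)^2 \<le> Re (cinner x (F x))"
  shows "\<exists>x. F x = y"
proof -
  obtain C where C: "C > 0" "\<forall>x. norm (F x) \<le> C * norm x" using bnd_pos[OF F(2)] by blast
  define C' where "C' = max C \<delta>"
  have C'pos: "C' > 0" and dC': "\<delta> \<le> C'" using C d by (auto simp: C'_def)
  have C': "\<forall>x. norm (F x) \<le> C' * norm x"
    using C(2) order_trans[OF _ mult_right_mono[OF max.cobounded1[of C \<delta>] norm_ge_zero]]
    unfolding C'_def by blast
  define t where "t = \<delta> / C'^2"
  have tpos: "t > 0" using d C'pos by (simp add: t_def)
  define q where "q = 1 - \<delta>^2 / C'^2"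
  have q0: "q \<ge> 0" using dC' d C'pos by (simp add: q_def field_simps power_mono)
  have q1: "q < 1" using d C'pos by (simp add: q_def)
  define c where "c = sqrt q"
  have c0: "0 \<le> c" and c1: "c < 1" using q0 q1 by (auto simp: c_def real_sqrt_lt_1_iff)
  define f where "f x = x - scaleR t (F x - y)" for x
  have contr: "dist (f x) (f x') \<le> c * dist x x'" for x x'
  proof -
    define w where "w = x - x'"
    have fw: "f x - f x' = w - scaleR t (F w)"
      unfolding f_def w_def by (simp add: lin_diff[OF F(1)] algebra_simps)
    have Fw: "norm (F w) \<le> C' * norm w" using C' by blast
    have "(norm (w - scaleR t (F w)))^2 = (norm w)^2 + t^2 * (norm (F w))^2 - 2 * t * Re (cinner w (F w))"
      using norm_diff_sq[of w "scaleR t (F w)"] tpos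
      by (simp add: cinner_scaleR_right power_mult_distrib)
    also have "\<dots> \<le> (norm w)^2 + t^2 * (C' * norm w)^2 - 2 * t * (\<delta> * (norm w)^2)"
    proof -
      have "(norm (F w))^2 \<le> (C' * norm w)^2" using Fw by (simp add: power_mono)
      then have "t^2 * (norm (F w))^2 \<le> t^2 * (C' * norm w)^2" by (simp add: mult_left_mono)
      moreover have "2 * t * (\<delta> * (norm w)^2) \<le> 2 * t * Re (cinner w (F w))"
        using co tpos by (simp add: mult_left_mono)
      ultimately show ?thesis by linarith
    qed
    also have "\<dots> = q * (norm w)^2"
      using C'pos by (simp add: q_def t_def field_simps power2_eq_square)
    also have "\<dots> = (c * norm w)^2" using q0 by (simp add: c_def power_mult_distrib)
    finally have "(norm (w - scaleR t (F w)))^2 \<le> (c * norm w)^2" .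
    then have "norm (w - scaleR t (F w)) \<le> c * norm w"
      by (rule power2_le_imp_le) (use c0 in simp)
    moreover have "dist (f x) (f x') = norm (w - scaleR t (F w))" by (simp only: dist_norm fw)
    moreover have "dist x x' = norm w" by (simp only: dist_norm w_def)
    ultimately show ?thesis by simp
  qed
  have "\<exists>!x. f x = x" by (rule banach_fix_type[OF c0 c1]) (use contr in blast)
  then obtain x where "f x = x" by blast
  then have "scaleR t (F x - y) = 0" by (simp add: f_def)
  then show ?thesis using tpos by auto
qed

lemma coercive_inverse:
  assumes F: "lin F" "bnd F" and d: "\<delta> > 0" and co: "\<forall>x. \<delta> * (norm x)^2 \<le> Re (cinner x (F x))"
  shows "\<exists>G. lin G \<and> bnd G \<and> (\<forall>x. G (F x) = x) \<and> (\<forall>y. F (G y) = y)"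
proof -
  define G where "G y = (SOME x. F x = y)" for y
  have FG: "F (G y) = y" for y
    unfolding G_def using coercive_surj[OF F d co, of y] by (rule someI_ex)
  have inj: "F a = F b \<Longrightarrow> a = b" for a b using coercive_inj[OF F(1) d co] by blast
  have GF: "G (F x) = x" for x using FG[of "F x"] inj by blast
  have linG: "lin G" unfolding lin_def
  proof (intro conjI allI)
    fix a b show "G (a + b) = G a + G b"
      by (rule inj) (simp add: FG lin_add[OF F(1)])
  next
    fix c a show "G (scaleC c a) = scaleC c (G a)"
      by (rule inj) (simp add: FG lin_scaleC[OF F(1)])
  qed
  have bndG: "bnd G" unfolding bnd_def
  proof (intro exI allI)
    fix y
    have "\<delta> * (norm (G y))^2 \<le> Re (cinner (G y) y)" using co[rule_format, of "G y"] by (simp add: FG)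
    also have "\<dots> \<le> norm (G y) * norm y" by (rule Re_cinner_le)
    finally have h: "\<delta> * (norm (G y) * norm (G y)) \<le> norm (G y) * norm y" by (simp add: power2_eq_square)
    show "norm (G y) \<le> (1/\<delta>) * norm y"
    proof (cases "norm (G y) = 0")
      case True then show ?thesis using d by simp
    next
      case False
      then have "\<delta> * norm (G y) \<le> norm y" using h by (simp add: mult.assoc mult.left_commute[of \<delta>])
      then show ?thesis using d by (simp add: field_simps)
    qed
  qed
  show ?thesis using linG bndG GF FG by blast
qed

lemma not_ess:
  fixes A :: "'a::complex_hilbert \<Rightarrow> 'a"
  assumes S: "lin S" "bnd S" and G: "lin G" "bnd G" "\<forall>x. G (S x) = x" "\<forall>y. S (G y) = y"
    and K: "cpt K" and eq: "\<forall>x. A x - scaleC z x = S x - K x"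
  shows "z \<notin> ess_spectrum A"
proof -
  have bG: "bounded_on UNIV UNIV G" using G unfolding bounded_on_def lin_clinear bnd_def by auto
  have K1: "cpt (\<lambda>x. - G (K x))" by (rule cpt_uminus[OF cpt_comp_left[OF K G(1) G(2)]])
  have K2: "cpt (\<lambda>x. - K (G x))" by (rule cpt_uminus[OF cpt_comp_right[OF K G(1) G(2)]])
  have e1: "G (A x - scaleC z x) = x + - G (K x)" for x
    using eq G(3) by (simp add: lin_diff[OF G(1)])
  have e2: "A (G x) - scaleC z (G x) = x + - K (G x)" for x
    using eq G(4) by simp
  show ?thesis unfolding ess_spectrum_def using bG K1 K2 e1 e2 by blast
qed

lemma sum_sq_bound:
  fixes t :: "nat \<Rightarrow> real"
  shows "(\<Sum>i<n. \<Sum>j<n. t i * t j) \<le> real n * (\<Sum>i<n. (t i)^2)"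
proof -
  have "(\<Sum>i<n. \<Sum>j<n. t i * t j) \<le> (\<Sum>i<n. \<Sum>j<n. ((t i)^2 + (t j)^2) / 2)"
  proof (intro sum_mono)
    fix i j
    have "0 \<le> (t i - t j)^2" by simp
    then show "t i * t j \<le> ((t i)^2 + (t j)^2) / 2" by (simp add: power2_eq_square algebra_simps)
  qed
  also have "\<dots> = (\<Sum>i<n. (real n * (t i)^2 + (\<Sum>j<n. (t j)^2)) / 2)"
    by (simp add: sum.distrib sum_divide_distrib[symmetric] add_divide_distrib)
  also have "\<dots> = real n * (\<Sum>i<n. (t i)^2)"
    by (simp add: sum.distrib sum_divide_distrib[symmetric] sum_distrib_left[symmetric])
  finally show ?thesis .
qed

context odec begin

lemma block_bound:
  fixes A :: "'a \<Rightarrow> 'a" and Kb :: "nat \<Rightarrow> nat \<Rightarrow> 'a \<Rightarrow> 'a" and a :: "nat \<Rightarrow> real"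
    and b :: "nat \<Rightarrow> nat \<Rightarrow> real" and M :: "nat \<Rightarrow> nat \<Rightarrow> real"
  assumes A: "lin A"
    and Kb: "\<forall>i<n. \<forall>j<n. compact_op (V j) (V i) (Kb i j)"
    and diag: "\<forall>i<n. \<forall>x\<in>V i. (a i - \<epsilon>) * (norm x)^2 \<le> Re (cinner x (P i (A x) + Kb i i x))"
    and off: "\<forall>i<n. \<forall>j<n. i \<noteq> j \<longrightarrow> (\<forall>x\<in>V j. norm (P i (A x) + Kb i j x) \<le> (b i j + \<epsilon>) * norm x)"
    and M: "M = (\<lambda>i j. if i = j then a i else - b i j)"
    and spec: "\<forall>t. lam * (\<Sum>i<n. (t i)^2) \<le> (\<Sum>i<n. \<Sum>j<n. M i j * t i * t j)"
    and eps: "\<epsilon> \<ge> 0"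
  shows "(lam - real n * \<epsilon>) * (norm x)^2 \<le> Re (cinner x (A x + (\<Sum>i<n. \<Sum>j<n. Kb i j (P j x))))"
proof -
  define u where "u j = P j x" for j
  define t where "t j = norm (u j)" for j
  define T where "T i j y = P i (A y) + Kb i j y" for i j y
  have uV: "j < n \<Longrightarrow> u j \<in> V j" for j by (simp add: u_def P_in)
  have KV: "i < n \<Longrightarrow> j < n \<Longrightarrow> y \<in> V j \<Longrightarrow> Kb i j y \<in> V i" for i j y
    using Kb unfolding compact_op_def clinear_on_def by blast
  have PK: "P i (\<Sum>i'<n. \<Sum>j<n. Kb i' j (u j)) = (\<Sum>j<n. Kb i j (u j))" if i: "i < n" for i
  proof -
    have "P i (\<Sum>i'<n. \<Sum>j<n. Kb i' j (u j)) = (\<Sum>i'<n. \<Sum>j<n. P i (Kb i' j (u j)))"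
      by (simp add: lin_sum[OF P_lin[OF i]])
    also have "\<dots> = (\<Sum>i'<n. \<Sum>j<n. if i' = i then Kb i j (u j) else 0)"
    proof (intro sum.cong refl)
      fix i' j assume "i' \<in> {..<n}" "j \<in> {..<n}"
      then show "P i (Kb i' j (u j)) = (if i' = i then Kb i j (u j) else 0)"
        using i KV uV P_fix P_kill by auto
    qed
    also have "\<dots> = (\<Sum>j<n. Kb i j (u j))"
      using i by (simp add: sum.swap[of _ "{..<n}" "{..<n}"])
    finally show ?thesis .
  qed
  have PA: "P i (A x) = (\<Sum>j<n. P i (A (u j)))" if i: "i < n" for i
  proof -
    have "A x = (\<Sum>j<n. A (u j))" unfolding u_def
      by (subst P_sum[of x]) (rule lin_sum[OF A])
    then show ?thesis by (simp add: lin_sum[OF P_lin[OF i]])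
  qed
  have Kx: "(\<Sum>i<n. \<Sum>j<n. Kb i j (P j x)) = (\<Sum>i<n. \<Sum>j<n. Kb i j (u j))" by (simp add: u_def)
  have row: "P i (A x + (\<Sum>i<n. \<Sum>j<n. Kb i j (P j x))) = (\<Sum>j<n. T i j (u j))" if i: "i < n" for i
    using i by (simp add: Kx lin_add[OF P_lin[OF i]] PK PA T_def sum.distrib)
  have "cinner x (A x + (\<Sum>i<n. \<Sum>j<n. Kb i j (P j x))) =
     (\<Sum>i<n. cinner (P i x) (P i (A x + (\<Sum>i<n. \<Sum>j<n. Kb i j (P j x)))))"
    by (rule cinner_decomp)
  also have "\<dots> = (\<Sum>i<n. \<Sum>j<n. cinner (u i) (T i j (u j)))"
  proof (rule sum.cong[OF refl])
    fix i assume "i \<in> {..<n}"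
    then have i: "i < n" by simp
    show "cinner (P i x) (P i (A x + (\<Sum>i<n. \<Sum>j<n. Kb i j (P j x)))) = (\<Sum>j<n. cinner (u i) (T i j (u j)))"
      unfolding row[OF i] by (simp only: u_def[symmetric] cinner_sum_right)
  qed
  finally have "cinner x (A x + (\<Sum>i<n. \<Sum>j<n. Kb i j (P j x))) = (\<Sum>i<n. \<Sum>j<n. cinner (u i) (T i j (u j)))" .
  then have eq: "Re (cinner x (A x + (\<Sum>i<n. \<Sum>j<n. Kb i j (P j x)))) = (\<Sum>i<n. \<Sum>j<n. Re (cinner (u i) (T i j (u j))))"
    by (simp add: Re_sum)
  have lower: "M i j * t i * t j - \<epsilon> * t i * t j \<le> Re (cinner (u i) (T i j (u j)))" if ij: "i < n" "j < n" for i j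
  proof (cases "i = j")
    case True
    then have "(a i - \<epsilon>) * (t i)^2 \<le> Re (cinner (u i) (T i j (u j)))"
      using diag ij uV by (simp add: t_def T_def)
    then show ?thesis using True M by (simp add: power2_eq_square algebra_simps)
  next
    case False
    have "norm (T i j (u j)) \<le> (b i j + \<epsilon>) * t j" using off ij False uV by (simp add: T_def t_def)
    then have "t i * norm (T i j (u j)) \<le> t i * ((b i j + \<epsilon>) * t j)"
      by (intro mult_left_mono) (auto simp: t_def)
    moreover have "- (t i * norm (T i j (u j))) \<le> Re (cinner (u i) (T i j (u j)))"
      unfolding t_def by (rule Re_cinner_ge)
    ultimately show ?thesis using False M by (simp add: algebra_simps)
  qed
  have "(\<Sum>i<n. \<Sum>j<n. M i j * t i * t j - \<epsilon> * (t i * t j)) \<le> (\<Sum>i<n. \<Sum>j<n. Re (cinner (u i) (T i j (u j))))"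
    using lower by (intro sum_mono) (simp add: mult.assoc)
  moreover have "(\<Sum>i<n. \<Sum>j<n. M i j * t i * t j - \<epsilon> * (t i * t j)) =
      (\<Sum>i<n. \<Sum>j<n. M i j * t i * t j) - \<epsilon> * (\<Sum>i<n. \<Sum>j<n. t i * t j)"
    by (simp add: sum_subtractf sum_distrib_left)
  moreover have "\<epsilon> * (\<Sum>i<n. \<Sum>j<n. t i * t j) \<le> \<epsilon> * (real n * (\<Sum>i<n. (t i)^2))"
    using eps sum_sq_bound[of t n] by (rule mult_left_mono[rotated])
  moreover have "(\<Sum>i<n. (t i)^2) = (norm x)^2" by (simp add: t_def u_def norm_sq_decomp[of x])
  moreover have "lam * (\<Sum>i<n. (t i)^2) \<le> (\<Sum>i<n. \<Sum>j<n. M i j * t i * t j)" using spec by blast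
  ultimately show ?thesis using eq by (simp add: algebra_simps)
qed

end

lemma lin_scal: "lin (\<lambda>x::'a::complex_hilbert. scaleC z x)"
  unfolding lin_def by (auto simp: scaleC_add_right scaleC_scaleC mult.commute)

lemma lin_minus_op: "lin S \<Longrightarrow> lin T \<Longrightarrow> lin (\<lambda>x. S x - T x)"
  unfolding lin_def by (auto simp: scaleC_diff_right)

lemma bnd_plus: "bnd S \<Longrightarrow> bnd T \<Longrightarrow> bnd (\<lambda>x. S x + T x)"
  unfolding bnd_def
proof (elim exE)
  fix C D assume C: "\<forall>x. norm (S x) \<le> C * norm x" and D: "\<forall>x. norm (T x) \<le> D * norm x"
  show "\<exists>E. \<forall>x. norm (S x + T x) \<le> E * norm x"
  proof (intro exI allI)
    fix x
    have "norm (S x + T x) \<le> norm (S x) + norm (T x)" by (rule norm_triangle_ineq)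
    also have "\<dots> \<le> C * norm x + D * norm x" using C D by (simp add: add_mono)
    finally show "norm (S x + T x) \<le> (C + D) * norm x" by (simp add: algebra_simps)
  qed
qed

lemma bnd_uminus: "bnd S \<Longrightarrow> bnd (\<lambda>x. - S x)" unfolding bnd_def by simp

lemma bnd_minus: "bnd S \<Longrightarrow> bnd T \<Longrightarrow> bnd (\<lambda>x. S x - T x)"
proof -
  assume "bnd S" "bnd T"
  then have "bnd (\<lambda>x. S x + (- T x))" by (intro bnd_plus bnd_uminus)
  then show ?thesis by simp
qed

lemma bnd_scal: "bnd (\<lambda>x::'a::complex_hilbert. scaleC z x)"
  unfolding bnd_def by (intro exI[of _ "cmod z"]) (simp add: norm_scaleC)

lemma bnd_scaleC_op: "bnd S \<Longrightarrow> bnd (\<lambda>x. scaleC c (S x))"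
  unfolding bnd_def
proof (elim exE)
  fix C assume C: "\<forall>x. norm (S x) \<le> C * norm x"
  show "\<exists>E. \<forall>x. norm (scaleC c (S x)) \<le> E * norm x"
  proof (intro exI allI)
    fix x
    have "norm (scaleC c (S x)) = cmod c * norm (S x)" by (rule norm_scaleC)
    also have "\<dots> \<le> cmod c * (C * norm x)" using C by (intro mult_left_mono) auto
    finally show "norm (scaleC c (S x)) \<le> (cmod c * C) * norm x" by (simp add: mult.assoc)
  qed
qed

lemma bnd_compose: "bnd S \<Longrightarrow> bnd T \<Longrightarrow> bnd (\<lambda>x. S (T x))"
proof -
  assume "bnd S" "bnd T"
  then obtain C D where C: "C > 0" "\<forall>x. norm (S x) \<le> C * norm x" and D: "D > 0" "\<forall>x. norm (T x) \<le> D * norm x"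
    using bnd_pos by metis
  show ?thesis unfolding bnd_def
  proof (intro exI allI)
    fix x
    have "norm (S (T x)) \<le> C * norm (T x)" using C by blast
    also have "\<dots> \<le> C * (D * norm x)" using C D by (intro mult_left_mono) auto
    finally show "norm (S (T x)) \<le> (C * D) * norm x" by (simp add: mult.assoc)
  qed
qed

lemma scaleC_cancel: "c \<noteq> 0 \<Longrightarrow> scaleC c (x::'a::complex_hilbert) = scaleC c y \<Longrightarrow> x = y"
  by (metis scaleC_scaleC scaleC_one left_inverse)

lemma zero_compact_op:
  assumes "0 \<in> W" shows "compact_op V W (\<lambda>x::'a::complex_hilbert. 0)"
  unfolding compact_op_def clinear_on_def
proof (intro conjI)
  show "compact (closure ((\<lambda>x::'a. 0::'a) ` {x \<in> V. norm x \<le> 1}))"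
    by (rule compact_closure_subset[of _ "{0}"]) auto
qed (use assms in auto)

context odec begin

lemma cpt_block:
  assumes i: "i < n" and j: "j < n" and K: "compact_op (V j) (V i) K"
  shows "cpt (\<lambda>x. K (P j x))"
  unfolding cpt_def'
proof
  have Kl: "\<forall>x\<in>V j. \<forall>y\<in>V j. K (x + y) = K x + K y" "\<forall>c. \<forall>x\<in>V j. K (scaleC c x) = scaleC c (K x)"
    using K unfolding compact_op_def clinear_on_def by blast+
  show "lin (\<lambda>x. K (P j x))" unfolding lin_def
  proof (intro conjI allI)
    fix x y show "K (P j (x + y)) = K (P j x) + K (P j y)"
      using Kl(1) P_in[OF j] by (simp add: lin_add[OF P_lin[OF j]])
  next
    fix c x show "K (P j (scaleC c x)) = scaleC c (K (P j x))"
      using Kl(2) P_in[OF j] by (simp add: lin_scaleC[OF P_lin[OF j]])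
  qed
  have c: "compact (closure (K ` {x \<in> V j. norm x \<le> 1}))" using K unfolding compact_op_def by blast
  have "(\<lambda>x. K (P j x)) ` {x. norm x \<le> 1} \<subseteq> closure (K ` {x \<in> V j. norm x \<le> 1})"
  proof
    fix w assume "w \<in> (\<lambda>x. K (P j x)) ` {x. norm x \<le> 1}"
    then obtain x where x: "norm x \<le> 1" "w = K (P j x)" by blast
    have "P j x \<in> {x \<in> V j. norm x \<le> 1}" using P_in[OF j] P_norm_le[OF j, of x] x(1) by auto
    then have "w \<in> K ` {x \<in> V j. norm x \<le> 1}" using x(2) by blast
    then show "w \<in> closure (K ` {x \<in> V j. norm x \<le> 1})" by (rule subsetD[OF closure_subset])
  qed
  then show "compact (closure ((\<lambda>x. K (P j x)) ` {x. norm x \<le> 1}))"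
    using c by (rule compact_closure_subset)
qed

end

lemma selfadj_real:
  assumes "selfadj_on UNIV A" shows "Im (cinner x (A x)) = 0"
proof -
  have "cinner (A x) x = cinner x (A x)" using assms unfolding selfadj_on_def by blast
  moreover have "cinner (A x) x = cnj (cinner x (A x))" by (rule cinner_conj)
  ultimately have "cnj (cinner x (A x)) = cinner x (A x)" by simp
  then show ?thesis by (metis Reals_cnj_iff complex_is_Real_iff)
qed

lemma cinner_self_of_real: "cinner (x::'a::complex_hilbert) x = complex_of_real ((norm x)^2)"
  by (rule norm_cinner[symmetric])

lemma im_part:
  fixes A :: "'a::complex_hilbert \<Rightarrow> 'a"
  assumes linA: "lin A" and bndA: "bnd A" and sa: "selfadj_on UNIV A" and iz: "Im z \<noteq> 0"
  shows "z \<notin> ess_spectrum A"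
proof -
  define c where "c = (if Im z > 0 then \<i> else - \<i>)"
  have c0: "c \<noteq> 0" by (simp add: c_def)
  define S0 where "S0 x = A x - scaleC z x" for x
  define S where "S x = scaleC c (S0 x)" for x
  have linS0: "lin S0" unfolding S0_def by (rule lin_minus_op[OF linA lin_scal])
  have bndS0: "bnd S0" unfolding S0_def by (rule bnd_minus[OF bndA bnd_scal])
  have linS: "lin S" unfolding S_def by (rule lin_scaleC_op[OF linS0])
  have bndS: "bnd S" unfolding S_def by (rule bnd_scaleC_op[OF bndS0])
  have co: "\<forall>x. \<bar>Im z\<bar> * (norm x)^2 \<le> Re (cinner x (S x))"
  proof
    fix x
    define w where "w = cinner x (A x)"
    have w: "Im w = 0" unfolding w_def by (rule selfadj_real[OF sa])
    have "cinner x (S x) = c * (w - z * complex_of_real ((norm x)^2))"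
      unfolding S_def S0_def w_def
      by (simp only: cinner_scaleC_right cinner_diff_right cinner_self_of_real)
    then have "Re (cinner x (S x)) = \<bar>Im z\<bar> * (norm x)^2"
      using w by (auto simp: c_def)
    then show "\<bar>Im z\<bar> * (norm x)^2 \<le> Re (cinner x (S x))" by simp
  qed
  have d: "\<bar>Im z\<bar> > 0" using iz by simp
  obtain G' where G': "lin G'" "bnd G'" "\<forall>x. G' (S x) = x" "\<forall>y. S (G' y) = y"
    using coercive_inverse[OF linS bndS d co] by blast
  define G where "G y = G' (scaleC c y)" for y
  have linG: "lin G" unfolding G_def by (rule lin_compose[OF G'(1) lin_scal])
  have bndG: "bnd G" unfolding G_def by (rule bnd_compose[OF G'(2) bnd_scal])
  have GS: "\<forall>x. G (S0 x) = x" using G'(3) by (simp add: G_def S_def)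
  have SG: "\<forall>y. S0 (G y) = y"
  proof
    fix y
    have "scaleC c (S0 (G y)) = scaleC c y" using G'(4) by (simp add: G_def S_def)
    then show "S0 (G y) = y" by (rule scaleC_cancel[OF c0])
  qed
  show ?thesis
    by (rule not_ess[OF linS0 bndS0 linG bndG GS SG cpt_zero]) (simp add: S0_def)
qed

context odec begin

lemma get_diag:
  fixes A :: "'a \<Rightarrow> 'a"
  assumes i: "i < n" and h: "ereal a \<le> ess_min (V i) (\<lambda>x. P i (A x))" and e: "\<epsilon> > 0"
  shows "\<exists>K. compact_op (V i) (V i) K \<and> (\<forall>x\<in>V i. (a - \<epsilon>) * (norm x)^2 \<le> Re (cinner x (P i (A x) + K x)))"
proof -
  define Set where "Set = {m. \<exists>K. compact_op (V i) (V i) K \<and> selfadj_on (V i) K \<and>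
       (\<forall>x\<in>V i. m * (norm x)^2 \<le> Re (cinner x (P i (A x) + K x)))}"
  have "ereal (a - \<epsilon>) < ereal a" using e by simp
  also have "\<dots> \<le> Sup (ereal ` Set)" using h unfolding ess_min_def Set_def by simp
  finally obtain m where m: "m \<in> Set" "a - \<epsilon> < m" by (auto simp: less_Sup_iff)
  then obtain K where K: "compact_op (V i) (V i) K"
      "\<forall>x\<in>V i. m * (norm x)^2 \<le> Re (cinner x (P i (A x) + K x))"
    unfolding Set_def by blast
  have "\<forall>x\<in>V i. (a - \<epsilon>) * (norm x)^2 \<le> Re (cinner x (P i (A x) + K x))"
  proof
    fix x assume x: "x \<in> V i"
    have "(a - \<epsilon>) * (norm x)^2 \<le> m * (norm x)^2" using m(2) by (intro mult_right_mono) auto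
    also have "\<dots> \<le> Re (cinner x (P i (A x) + K x))" using K(2) x by blast
    finally show "(a - \<epsilon>) * (norm x)^2 \<le> Re (cinner x (P i (A x) + K x))" .
  qed
  then show ?thesis using K(1) by blast
qed

lemma get_off:
  fixes A :: "'a \<Rightarrow> 'a"
  assumes i: "i < n" and j: "j < n" and linA: "lin A" and bndA: "bnd A"
    and h: "ess_norm (V j) (V i) (\<lambda>x. P i (A x)) \<le> b" and e: "\<epsilon> > 0"
  shows "\<exists>K. compact_op (V j) (V i) K \<and> (\<forall>x\<in>V j. norm (P i (A x) + K x) \<le> (b + \<epsilon>) * norm x)"
proof -
  define X where "X = (\<lambda>K. opnorm_on (V j) (\<lambda>x. P i (A x) + K x)) ` {K. compact_op (V j) (V i) K}"
  have ne: "X \<noteq> {}" unfolding X_def using zero_compact_op[OF V_zero[OF i], of "V j"] by blast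
  have "Inf X < b + \<epsilon>" using h e unfolding ess_norm_def X_def by simp
  then obtain r where "r \<in> X" "r < b + \<epsilon>" using cInf_lessD[OF ne] by blast
  then obtain K where K: "compact_op (V j) (V i) K" "opnorm_on (V j) (\<lambda>x. P i (A x) + K x) < b + \<epsilon>"
    unfolding X_def by blast
  have Kh: "K (scaleR r x) = scaleR r (K x)" if "x \<in> V j" for r x
  proof -
    have "K (scaleC (complex_of_real r) x) = scaleC (complex_of_real r) (K x)"
      using K(1) that unfolding compact_op_def clinear_on_def by blast
    then show ?thesis by (simp only: scaleC_of_real)
  qed
  have hom: "\<forall>x\<in>V j. \<forall>r. scaleR r x \<in> V j \<and> P i (A (scaleR r x)) + K (scaleR r x) = scaleR r (P i (A x) + K x)"
    using Kh V_scaleR[OF j] by (simp add: lin_scaleR[OF linA] lin_scaleR[OF P_lin[OF i]] scaleR_add_right)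
  obtain CK where CK: "\<forall>x\<in>V j. norm (K x) \<le> CK * norm x"
    using compact_op_bound[OF K(1)] V_scaleR[OF j] by blast
  obtain CA where CA: "\<forall>x. norm (A x) \<le> CA * norm x" using bndA unfolding bnd_def by blast
  have bound: "\<forall>x\<in>V j. norm (P i (A x) + K x) \<le> (CA + CK) * norm x"
  proof
    fix x assume x: "x \<in> V j"
    have "norm (P i (A x) + K x) \<le> norm (P i (A x)) + norm (K x)" by (rule norm_triangle_ineq)
    also have "\<dots> \<le> CA * norm x + CK * norm x"
      using P_norm_le[OF i, of "A x"] CA CK x by (meson add_mono order_trans)
    finally show "norm (P i (A x) + K x) \<le> (CA + CK) * norm x" by (simp add: algebra_simps)
  qed
  have "\<forall>x\<in>V j. norm (P i (A x) + K x) \<le> (b + \<epsilon>) * norm x"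
  proof
    fix x assume x: "x \<in> V j"
    have "norm (P i (A x) + K x) \<le> opnorm_on (V j) (\<lambda>x. P i (A x) + K x) * norm x"
      by (rule opnorm_bound[OF hom bound x])
    also have "\<dots> \<le> (b + \<epsilon>) * norm x" using K(2) by (intro mult_right_mono) auto
    finally show "norm (P i (A x) + K x) \<le> (b + \<epsilon>) * norm x" .
  qed
  then show ?thesis using K(1) by blast
qed

end

context odec begin

lemma re_part:
  fixes A :: "'a \<Rightarrow> 'a" and a :: "nat \<Rightarrow> real" and b :: "nat \<Rightarrow> nat \<Rightarrow> real"
  assumes n1: "n \<ge> 1" and linA: "lin A" and bndA: "bnd A"
    and hd: "\<forall>i<n. ereal (a i) \<le> ess_min (V i) (\<lambda>x. P i (A x))"
    and ho: "\<forall>i<n. \<forall>j<n. i \<noteq> j \<longrightarrow> ess_norm (V j) (V i) (\<lambda>x. P i (A x)) \<le> b i j"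
    and spec: "\<forall>t. lam * (\<Sum>i<n. (t i)^2) \<le> (\<Sum>i<n. \<Sum>j<n. (if i = j then a i else - b i j) * t i * t j)"
    and z: "Re z < lam"
  shows "z \<notin> ess_spectrum A"
proof -
  define \<epsilon> where "\<epsilon> = (lam - Re z) / (2 * real n)"
  have e: "\<epsilon> > 0" using z n1 by (simp add: \<epsilon>_def)
  have ne: "real n * \<epsilon> = (lam - Re z) / 2" using n1 by (simp add: \<epsilon>_def)
  define Q where "Q i j K \<longleftrightarrow> (i < n \<longrightarrow> j < n \<longrightarrow> compact_op (V j) (V i) K \<and>
     (i = j \<longrightarrow> (\<forall>x\<in>V i. (a i - \<epsilon>) * (norm x)^2 \<le> Re (cinner x (P i (A x) + K x)))) \<and>
     (i \<noteq> j \<longrightarrow> (\<forall>x\<in>V j. norm (P i (A x) + K x) \<le> (b i j + \<epsilon>) * norm x)))" for i j K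
  have ex: "\<exists>K. Q i j K" for i j
  proof (cases "i < n \<and> j < n")
    case False then show ?thesis unfolding Q_def by blast
  next
    case True
    then have i: "i < n" and j: "j < n" by auto
    show ?thesis
    proof (cases "i = j")
      case True
      obtain K where "compact_op (V i) (V i) K" "\<forall>x\<in>V i. (a i - \<epsilon>) * (norm x)^2 \<le> Re (cinner x (P i (A x) + K x))"
        using get_diag[OF i _ e, of "a i" A] hd i by blast
      then show ?thesis unfolding Q_def using True by blast
    next
      case False
      obtain K where "compact_op (V j) (V i) K" "\<forall>x\<in>V j. norm (P i (A x) + K x) \<le> (b i j + \<epsilon>) * norm x"
        using get_off[OF i j linA bndA _ e, of "b i j"] ho i j False by blast
      then show ?thesis unfolding Q_def using False by blast
    qed
  qed
  have "\<forall>i. \<exists>g. \<forall>j. Q i j (g j)"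
  proof
    fix i show "\<exists>g. \<forall>j. Q i j (g j)" by (rule choice) (use ex in blast)
  qed
  then have "\<exists>Kb. \<forall>i. \<forall>j. Q i j (Kb i j)" by (rule choice)
  then obtain Kb where Kb: "\<forall>i j. Q i j (Kb i j)" by blast
  have Kbc: "\<forall>i<n. \<forall>j<n. compact_op (V j) (V i) (Kb i j)" using Kb unfolding Q_def by blast
  have Kbd: "\<forall>i<n. \<forall>x\<in>V i. (a i - \<epsilon>) * (norm x)^2 \<le> Re (cinner x (P i (A x) + Kb i i x))"
    using Kb unfolding Q_def by blast
  have Kbo: "\<forall>i<n. \<forall>j<n. i \<noteq> j \<longrightarrow> (\<forall>x\<in>V j. norm (P i (A x) + Kb i j x) \<le> (b i j + \<epsilon>) * norm x)"
    using Kb unfolding Q_def by blast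
  define K where "K x = (\<Sum>i<n. \<Sum>j<n. Kb i j (P j x))" for x
  have cptK: "cpt K" unfolding K_def
  proof (rule cpt_sum)
    fix i assume i: "i \<in> {..<n}"
    show "cpt (\<lambda>x. \<Sum>j<n. Kb i j (P j x))"
    proof (rule cpt_sum)
      fix j assume j: "j \<in> {..<n}"
      show "cpt (\<lambda>x. Kb i j (P j x))" using i j Kbc by (intro cpt_block) auto
    qed
  qed
  have bb: "(lam - real n * \<epsilon>) * (norm x)^2 \<le> Re (cinner x (A x + K x))" for x
    unfolding K_def
    by (rule block_bound[OF linA Kbc Kbd Kbo refl spec]) (use e in simp)
  define S where "S x = A x + K x - scaleC z x" for x
  have linS: "lin S" unfolding S_def
    by (rule lin_minus_op[OF lin_plus[OF linA cpt_lin[OF cptK]] lin_scal])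
  have bndS: "bnd S" unfolding S_def
    by (rule bnd_minus[OF bnd_plus[OF bndA cpt_bnd[OF cptK]] bnd_scal])
  have d: "(lam - Re z) / 2 > 0" using z by simp
  have co: "\<forall>x. (lam - Re z) / 2 * (norm x)^2 \<le> Re (cinner x (S x))"
  proof
    fix x
    have "cinner x (S x) = cinner x (A x + K x) - z * complex_of_real ((norm x)^2)"
      unfolding S_def by (simp only: cinner_diff_right cinner_scaleC_right cinner_self_of_real)
    then have "Re (cinner x (S x)) = Re (cinner x (A x + K x)) - Re z * (norm x)^2" by simp
    moreover have "(lam - real n * \<epsilon>) * (norm x)^2 \<le> Re (cinner x (A x + K x))" by (rule bb)
    moreover have "(lam - Re z) / 2 * (norm x)^2 = (lam - real n * \<epsilon>) * (norm x)^2 - Re z * (norm x)^2"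
    proof -
      have h: "(lam - Re z) / 2 = lam - real n * \<epsilon> - Re z" using n1 unfolding \<epsilon>_def by (simp add: field_simps)
      show ?thesis unfolding h by (simp add: algebra_simps)
    qed
    ultimately show "(lam - Re z) / 2 * (norm x)^2 \<le> Re (cinner x (S x))" by linarith
  qed
  obtain G where G: "lin G" "bnd G" "\<forall>x. G (S x) = x" "\<forall>y. S (G y) = y"
    using coercive_inverse[OF linS bndS d co] by blast
  show ?thesis
    by (rule not_ess[OF linS bndS G cptK]) (simp add: S_def)
qed

end

theorem lemma2_core:
  fixes n :: nat and V :: "nat \<Rightarrow> 'a::complex_hilbert set" and A :: "'a \<Rightarrow> 'a"
    and a :: "nat \<Rightarrow> real" and b :: "nat \<Rightarrow> nat \<Rightarrow> real"
  assumes "n \<ge> 1"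
    and "orth_decomp n V"
    and "bounded_on UNIV UNIV A"
    and "selfadj_on UNIV A"
    and "\<forall>i<n. ereal (a i) \<le> ess_min (V i) (\<lambda>x. proj (V i) (A x))"
    and "\<forall>i<n. \<forall>j<n. i \<noteq> j \<longrightarrow> ess_norm (V j) (V i) (\<lambda>x. proj (V i) (A x)) \<le> b i j"
    and spec: "\<forall>t. min_eig n (\<lambda>i j. if i = j then a i else - b i j) * (\<Sum>i<n. (t i)^2)
         \<le> (\<Sum>i<n. \<Sum>j<n. (if i = j then a i else - b i j) * t i * t j)"
  shows "\<forall>z\<in>ess_spectrum A. Im z = 0 \<and>
           min_eig n (\<lambda>i j. if i = j then a i else - b i j) \<le> Re z"
proof
  interpret odec n V by unfold_locales (rule assms(2))
  have linA: "lin A" using assms(3) unfolding bounded_on_def lin_clinear by blast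
  have bndA: "bnd A" using assms(3) unfolding bounded_on_def bnd_def by blast
  fix z assume z: "z \<in> ess_spectrum A"
  have "Im z = 0" using im_part[OF linA bndA assms(4)] z by blast
  moreover have "min_eig n (\<lambda>i j. if i = j then a i else - b i j) \<le> Re z"
  proof (rule ccontr)
    assume "\<not> ?thesis"
    then have "Re z < min_eig n (\<lambda>i j. if i = j then a i else - b i j)" by simp
    then have "z \<notin> ess_spectrum A"
      by (rule re_part[OF assms(1) linA bndA assms(5) assms(6) spec])
    then show False using z by blast
  qed
  ultimately show "Im z = 0 \<and> min_eig n (\<lambda>i j. if i = j then a i else - b i j) \<le> Re z" by blast
qed

lemma eig_set_finite:
  "finite {\<mu>. \<exists>v::nat \<Rightarrow> real. (\<exists>i<n. v i \<noteq> 0) \<and> (\<forall>i<n. (\<Sum>j<n. M i j * v j) = \<mu> * v i)}"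
proof -
  define A where "A = Matrix.mat n n (\<lambda>(i,j). M i j)"
  have A: "A \<in> carrier_mat n n" by (simp add: A_def)
  have fin: "finite {k. eigenvalue A k}"
  proof -
    have "char_poly A \<noteq> 0" using degree_monic_char_poly[OF A] by auto
    then show ?thesis using eigenvalue_root_char_poly[OF A] poly_roots_finite by auto
  qed
  have "{\<mu>. \<exists>v::nat \<Rightarrow> real. (\<exists>i<n. v i \<noteq> 0) \<and> (\<forall>i<n. (\<Sum>j<n. M i j * v j) = \<mu> * v i)}
        \<subseteq> {k. eigenvalue A k}"
  proof
    fix \<mu> assume "\<mu> \<in> {\<mu>. \<exists>v::nat \<Rightarrow> real. (\<exists>i<n. v i \<noteq> 0) \<and> (\<forall>i<n. (\<Sum>j<n. M i j * v j) = \<mu> * v i)}"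
    then obtain v :: "nat \<Rightarrow> real" where nz: "\<exists>i<n. v i \<noteq> 0" and ev: "\<forall>i<n. (\<Sum>j<n. M i j * v j) = \<mu> * v i"
      by blast
    define w where "w = Matrix.vec n v"
    have wc: "w \<in> carrier_vec n" by (simp add: w_def)
    have wnz: "w \<noteq> 0\<^sub>v n"
    proof
      assume "w = 0\<^sub>v n"
      then have "\<forall>i<n. v i = 0" by (metis w_def index_vec index_zero_vec(1))
      then show False using nz by blast
    qed
    have "A *\<^sub>v w = \<mu> \<cdot>\<^sub>v w"
    proof (rule eq_vecI)
      show "dim_vec (A *\<^sub>v w) = dim_vec (\<mu> \<cdot>\<^sub>v w)" using A wc by simp
      fix i assume "i < dim_vec (\<mu> \<cdot>\<^sub>v w)"
      then have i: "i < n" using wc by simp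
      have "(A *\<^sub>v w) $ i = (\<Sum>j\<in>{0..<n}. M i j * v j)"
        using i A unfolding A_def w_def by (simp add: scalar_prod_def)
      also have "\<dots> = \<mu> * v i" using ev i by (simp add: atLeast0LessThan)
      also have "\<dots> = (\<mu> \<cdot>\<^sub>v w) $ i" using i by (simp add: w_def)
      finally show "(A *\<^sub>v w) $ i = (\<mu> \<cdot>\<^sub>v w) $ i" .
    qed
    then have "eigenvector A w \<mu>" unfolding eigenvector_def using wc wnz A by simp
    then show "\<mu> \<in> {k. eigenvalue A k}" unfolding eigenvalue_def by blast
  qed
  then show ?thesis using fin by (rule finite_subset)
qed

definition bil :: "nat \<Rightarrow> (nat \<Rightarrow> nat \<Rightarrow> real) \<Rightarrow> (nat \<Rightarrow> real) \<Rightarrow> (nat \<Rightarrow> real) \<Rightarrow> real" where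
  "bil n M t e = (\<Sum>i<n. \<Sum>j<n. M i j * t i * e j)"

definition nsq :: "nat \<Rightarrow> (nat \<Rightarrow> real) \<Rightarrow> real" where
  "nsq n t = (\<Sum>i<n. (t i)^2)"

lemma bil_expand:
  "bil n M (\<lambda>i. t i + s * e i) (\<lambda>i. t i + s * e i) = bil n M t t + s * bil n M t e + s * bil n M e t + s^2 * bil n M e e"
proof -
  have "bil n M (\<lambda>i. t i + s * e i) (\<lambda>i. t i + s * e i) =
    (\<Sum>i<n. \<Sum>j<n. M i j * t i * t j + s * (M i j * t i * e j) + s * (M i j * e i * t j) + s^2 * (M i j * e i * e j))"
    unfolding bil_def by (intro sum.cong refl) (simp add: algebra_simps power2_eq_square)
  also have "\<dots> = bil n M t t + s * bil n M t e + s * bil n M e t + s^2 * bil n M e e"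
    unfolding bil_def by (simp add: sum.distrib sum_distrib_left)
  finally show ?thesis .
qed

lemma nsq_expand:
  assumes "k < n"
  shows "nsq n (\<lambda>i. t i + s * (if i = k then 1 else 0)) = nsq n t + 2 * s * t k + s^2"
proof -
  have "nsq n (\<lambda>i. t i + s * (if i = k then 1 else 0)) =
     (\<Sum>i<n. (t i)^2 + (if i = k then 2 * s * t k + s^2 else 0))"
    unfolding nsq_def by (intro sum.cong refl) (simp add: power2_eq_square algebra_simps)
  also have "\<dots> = nsq n t + 2 * s * t k + s^2"
    using assms by (simp add: sum.distrib nsq_def)
  finally show ?thesis .
qed

lemma bil_delta_right:
  assumes "k < n" shows "bil n M t (\<lambda>j. if j = k then 1 else 0) = (\<Sum>i<n. M i k * t i)"
proof -
  have "bil n M t (\<lambda>j. if j = k then 1 else 0) = (\<Sum>i<n. \<Sum>j<n. if j = k then M i j * t i else 0)"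
    unfolding bil_def by (intro sum.cong refl) simp
  also have "\<dots> = (\<Sum>i<n. M i k * t i)" using assms by simp
  finally show ?thesis .
qed

lemma bil_delta_both:
  assumes "k < n" shows "bil n M (\<lambda>j. if j = k then 1 else 0) (\<lambda>j. if j = k then 1 else 0) = M k k"
proof -
  have "bil n M (\<lambda>j. if j = k then 1 else 0) (\<lambda>j. if j = k then 1 else 0) = (\<Sum>i<n. M i k * (if i = k then 1 else 0))"
    by (rule bil_delta_right[OF assms])
  also have "\<dots> = (\<Sum>i<n. if i = k then M i k else 0)" by (intro sum.cong refl) simp
  also have "\<dots> = M k k" using assms by simp
  finally show ?thesis .
qed

lemma bil_sym:
  assumes "\<forall>i<n. \<forall>j<n. M i j = M j i" shows "bil n M e t = bil n M t e"
proof -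
  have "bil n M e t = (\<Sum>j<n. \<Sum>i<n. M i j * e i * t j)" unfolding bil_def by (rule sum.swap)
  also have "\<dots> = bil n M t e" unfolding bil_def
    using assms by (intro sum.cong refl) (simp add: algebra_simps)
  finally show ?thesis .
qed

lemma quad_zero:
  fixes b d :: real
  assumes "\<forall>s. 0 \<le> s * b + s^2 * d" shows "b = 0"
proof (rule ccontr)
  assume b: "b \<noteq> 0"
  define D where "D = \<bar>d\<bar> + 1"
  have D: "D > 0" "d - D < 0" by (auto simp: D_def)
  have "(- b / D) * b + (- b / D)^2 * d = b^2 * (d - D) / D^2"
    using D by (simp add: field_simps power2_eq_square)
  also have "\<dots> < 0" using D b by (intro divide_neg_pos mult_pos_neg) auto
  finally show False using assms by (metis not_le)
qed


lemma nsq_nonneg: "nsq n t \<ge> 0" unfolding nsq_def by (intro sum_nonneg) simp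

lemma coord_cont: "continuous_on A (\<lambda>t::nat \<Rightarrow> real. t i)"
  by (rule continuous_on_subset[OF continuous_on_product_coordinates]) (rule subset_UNIV)

lemma nsq_cont: "continuous_on A (nsq n)"
  unfolding nsq_def by (intro continuous_intros coord_cont)

lemma bil_cont: "continuous_on A (\<lambda>t. bil n M t t)"
  unfolding bil_def by (intro continuous_intros coord_cont)

lemma exists_min:
  assumes "n \<ge> 1"
  shows "\<exists>t0. nsq n t0 = 1 \<and> (\<forall>t. nsq n t = 1 \<longrightarrow> bil n M t0 t0 \<le> bil n M t t)"
proof -
  define Bx where "Bx = PiE UNIV (\<lambda>i::nat. if i < n then {-1..1::real} else {0})"
  have "compactin (product_topology (\<lambda>i. euclidean) UNIV) Bx"
    unfolding Bx_def by (subst compactin_PiE) auto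
  then have cB: "compact Bx" by (simp add: euclidean_product_topology)
  define S where "S = Bx \<inter> {t. nsq n t = 1}"
  have clo: "closed {t. nsq n t = 1}" by (intro closed_Collect_eq nsq_cont continuous_on_const)
  have cS: "compact S" unfolding S_def using cB clo by (rule compact_Int_closed)
  have bnd1: "\<bar>t i\<bar> \<le> 1" if "nsq n t = 1" "i < n" for t i
  proof -
    have "(t i)^2 \<le> nsq n t" unfolding nsq_def using that(2) by (intro member_le_sum) auto
    then have "(t i)^2 \<le> 1" using that(1) by simp
    then show ?thesis by (simp add: abs_square_le_1)
  qed
  have inS: "(\<lambda>i. if i < n then t i else 0) \<in> S" if "nsq n t = 1" for t
  proof -
    have "nsq n (\<lambda>i. if i < n then t i else 0) = nsq n t" unfolding nsq_def by (intro sum.cong) auto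
    moreover have "(\<lambda>i. if i < n then t i else 0) \<in> Bx"
      unfolding Bx_def using bnd1[OF that] by (auto simp: PiE_def abs_le_iff)
    ultimately show ?thesis using that by (simp add: S_def)
  qed
  have e0: "nsq n (\<lambda>i. if i = 0 then 1 else 0) = 1"
    unfolding nsq_def using assms by (simp add: if_distrib[of "\<lambda>x. x^2"] cong: if_cong)
  have ne: "S \<noteq> {}" using inS[OF e0] by blast
  obtain t0 where t0: "t0 \<in> S" "\<forall>y\<in>S. bil n M t0 t0 \<le> bil n M y y"
    using continuous_attains_inf[OF cS ne bil_cont] by blast
  have bil_r: "bil n M (\<lambda>i. if i < n then t i else 0) (\<lambda>i. if i < n then t i else 0) = bil n M t t" for t
    unfolding bil_def by (intro sum.cong refl) auto
  show ?thesis
  proof (intro exI conjI allI impI)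
    show "nsq n t0 = 1" using t0(1) by (simp add: S_def)
    fix t assume "nsq n t = 1"
    then show "bil n M t0 t0 \<le> bil n M t t" using t0(2) inS bil_r by metis
  qed
qed


lemma spec_ineq:
  assumes n: "n \<ge> 1" and sym: "\<forall>i<n. \<forall>j<n. M i j = M j i"
  shows "\<forall>t. min_eig n M * (\<Sum>i<n. (t i)^2) \<le> (\<Sum>i<n. \<Sum>j<n. M i j * t i * t j)"
proof -
  obtain t0 where t0: "nsq n t0 = 1" "\<forall>t. nsq n t = 1 \<longrightarrow> bil n M t0 t0 \<le> bil n M t t"
    using exists_min[OF n] by blast
  define \<mu> where "\<mu> = bil n M t0 t0"
  have ray: "\<mu> * nsq n t \<le> bil n M t t" for t
  proof (cases "nsq n t = 0")
    case True
    then have z: "\<forall>i<n. t i = 0" unfolding nsq_def by (simp add: sum_nonneg_eq_0_iff)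
    then have "bil n M t t = 0" unfolding bil_def by simp
    then show ?thesis using True by simp
  next
    case False
    then have pos: "nsq n t > 0" using nsq_nonneg[of n t] by linarith
    define r where "r = sqrt (nsq n t)"
    have r: "r > 0" "r^2 = nsq n t" using pos by (auto simp: r_def)
    define v where "v i = t i / r" for i
    have "nsq n v = (\<Sum>i<n. (t i)^2 / r^2)" unfolding nsq_def v_def by (simp add: power_divide)
    also have "\<dots> = nsq n t / r^2" unfolding nsq_def by (rule sum_divide_distrib[symmetric])
    finally have "nsq n v = 1" using r pos by simp
    then have "\<mu> \<le> bil n M v v" using t0 \<mu>_def by blast
    moreover have "bil n M v v = bil n M t t / r^2"
    proof -
      have "bil n M v v = (\<Sum>i<n. \<Sum>j<n. (M i j * t i * t j) / r^2)"
        unfolding bil_def v_def by (intro sum.cong refl) (simp add: power2_eq_square)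
      also have "\<dots> = bil n M t t / r^2" unfolding bil_def by (simp add: sum_divide_distrib)
      finally show ?thesis .
    qed
    ultimately have "\<mu> \<le> bil n M t t / nsq n t" using r by simp
    then show ?thesis using pos by (simp add: pos_le_divide_eq)
  qed
  have eig: "(\<Sum>j<n. M k j * t0 j) = \<mu> * t0 k" if k: "k < n" for k
  proof -
    define e where "e j = (if j = k then 1 else 0 :: real)" for j
    define L where "L = (\<Sum>i<n. M i k * t0 i)"
    have L1: "bil n M t0 e = L" unfolding e_def L_def by (rule bil_delta_right[OF k])
    have L2: "bil n M e t0 = L" using bil_sym[OF sym, of e t0] L1 by simp
    have ee: "bil n M e e = M k k" unfolding e_def by (rule bil_delta_both[OF k])
    have q: "0 \<le> s * (2 * L - 2 * \<mu> * t0 k) + s^2 * (M k k - \<mu>)" for s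
    proof -
      have "\<mu> * nsq n (\<lambda>i. t0 i + s * e i) \<le> bil n M (\<lambda>i. t0 i + s * e i) (\<lambda>i. t0 i + s * e i)"
        by (rule ray)
      moreover have "nsq n (\<lambda>i. t0 i + s * e i) = 1 + 2 * s * t0 k + s^2"
        using nsq_expand[OF k, of t0 s] t0(1) by (simp add: e_def)
      moreover have "bil n M (\<lambda>i. t0 i + s * e i) (\<lambda>i. t0 i + s * e i) = \<mu> + s * L + s * L + s^2 * M k k"
        using bil_expand[of n M t0 s e] L1 L2 ee \<mu>_def by simp
      ultimately have h: "\<mu> * (1 + 2 * s * t0 k + s^2) \<le> \<mu> + s * L + s * L + s^2 * M k k" by simp
      have "s * (2 * L - 2 * \<mu> * t0 k) + s^2 * (M k k - \<mu>) =
          (\<mu> + s * L + s * L + s^2 * M k k) - \<mu> * (1 + 2 * s * t0 k + s^2)"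
        by (simp add: algebra_simps)
      then show ?thesis using h by linarith
    qed
    have "2 * L - 2 * \<mu> * t0 k = 0" using quad_zero[of "2 * L - 2 * \<mu> * t0 k" "M k k - \<mu>"] q by blast
    then have "L = \<mu> * t0 k" by simp
    moreover have "(\<Sum>j<n. M k j * t0 j) = L" unfolding L_def using sym k by (intro sum.cong refl) auto
    ultimately show ?thesis by simp
  qed
  have nz: "\<exists>i<n. t0 i \<noteq> 0"
  proof (rule ccontr)
    assume "\<not> (\<exists>i<n. t0 i \<noteq> 0)"
    then have "nsq n t0 = 0" unfolding nsq_def by simp
    then show False using t0(1) by simp
  qed
  have mem: "\<mu> \<in> {\<mu>. \<exists>v::nat \<Rightarrow> real. (\<exists>i<n. v i \<noteq> 0) \<and> (\<forall>i<n. (\<Sum>j<n. M i j * v j) = \<mu> * v i)}"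
    using nz eig by blast
  have me: "min_eig n M \<le> \<mu>" unfolding min_eig_def using eig_set_finite mem by (rule Min_le)
  show ?thesis
  proof
    fix t
    have "min_eig n M * nsq n t \<le> \<mu> * nsq n t" using me nsq_nonneg[of n t] by (rule mult_right_mono)
    also have "\<dots> \<le> bil n M t t" by (rule ray)
    finally show "min_eig n M * (\<Sum>i<n. (t i)^2) \<le> (\<Sum>i<n. \<Sum>j<n. M i j * t i * t j)"
      unfolding nsq_def bil_def .
  qed
qed

theorem lemma2:
  fixes n :: nat and V :: "nat \<Rightarrow> 'a::complex_hilbert set" and A :: "'a \<Rightarrow> 'a"
    and a :: "nat \<Rightarrow> real" and b :: "nat \<Rightarrow> nat \<Rightarrow> real"
  assumes "n \<ge> 1"
    and "orth_decomp n V"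
    and "bounded_on UNIV UNIV A"
    and "selfadj_on UNIV A"
    and "\<forall>i<n. \<forall>j<n. i \<noteq> j \<longrightarrow> b i j = b j i"
    and "\<forall>i<n. ereal (a i) \<le> ess_min (V i) (\<lambda>x. proj (V i) (A x))"
    and "\<forall>i<n. \<forall>j<n. i \<noteq> j \<longrightarrow> ess_norm (V j) (V i) (\<lambda>x. proj (V i) (A x)) \<le> b i j"
  shows "\<forall>z\<in>ess_spectrum A. Im z = 0 \<and>
           min_eig n (\<lambda>i j. if i = j then a i else - b i j) \<le> Re z"
proof -
  have sym: "\<forall>i<n. \<forall>j<n. (\<lambda>i j. if i = j then a i else - b i j) i j = (\<lambda>i j. if i = j then a i else - b i j) j i"
    using assms(5) by auto
  show ?thesis
    by (rule lemma2_core[OF assms(1-4) assms(6) assms(7) spec_ineq[OF assms(1) sym]])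
qed

end
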